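(* The cost-LPR calculus and the cost-BC calculus are incomplete: there is a MaxSAT instance $\Gamma$ encoded with blocking variables with $\mathrm{cost}(\Gamma)=1$ such that no derivation from $\Gamma$ in the cost-LPR calculus (and no derivation in the cost-BC calculus) contains a unit clause $b$ for a blocking variable $b$; in particular neither calculus proves $\mathrm{cost}(\Gamma)\ge 1$.
   Context: Literals, clauses, CNFs (multisets of clauses), $\mathrm{Var}(\Gamma)$. A substitution $\sigma$ maps variables to $0$, $1$ or literals, extended by $\sigma(\lnot x)=\lnot\sigma(x)$; $(\sigma\circ\tau)(x)=\sigma(\tau(x))$. A (partial) assignment has $\sigma(x)\in\{0,1,x\}$; its domain is $\sigma^{-1}(\{0,1\})$; total means all variables assigned. $C{\upharpoonright}_\sigma$: apply $\sigma$ to literals and simplify; $\Gamma{\upharpoonright}_\sigma$ is the multiset of $C{\upharpoonright}_\sigma\ne1$, $C\in\Gamma$. $\lnot C$ is the partial assignment falsifying all literals of $C$. $\Gamma\vdash_1 C$ means unit propagation on $\Gamma{\upharpoonright}_{\lnot C}$ derives the empty clause; $\Gamma\vdash_1\Delta$ means this holds for all $D\in\Delta$. A MaxSAT instance encoded with blocking variables is a CNF $\Gamma=H\cup\{C_1\lor b_1,\dots,C_m\lor b_m\}$ with distinct fresh blocking variables $b_i$; $\mathrm{cost}(\alpha)=\sum_i\alpha(b_i)$ for total $\alpha$; $\mathrm{cost}(\Gamma)=\min\{\mathrm{cost}(\alpha):\alpha\models\Gamma\}$. $C$ is cost-LPR w.r.t. $\Gamma$ if there is a partial assignment $\sigma$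 with the same domain as $\lnot C$, differing from $\lnot C$ on exactly one variable, such that (1) $\Gamma{\upharpoonright}_{\lnot C}\vdash_1(\Gamma\cup\{C\}){\upharpoonright}_\sigma$ and (2) $\mathrm{cost}(\tau\circ\sigma)\le\mathrm{cost}(\tau)$ for all total $\tau\supseteq\lnot C$. A clause $C\lor\ell$ is cost-BC w.r.t. $\Gamma$ and the literal $\ell$ if for every clause $D\lor\lnot\ell\in\Gamma$, $C\lor D$ is a tautology, and $\ell$ is not a blocking variable with positive polarity. A derivation in the cost-LPR (resp. cost-BC) calculus from $\Gamma$ is a sequence $D_1,\dots,D_t$ where each $D_i$ is in $\Gamma$, or follows from earlier clauses by weakening (from $A$ infer $B\supseteq A$) or resolution (from $A\lor x$, $B\lor\lnot x$ infer $A\lor B$), or is cost-LPR (resp. cost-BC) w.r.t. $\Gamma\cup\{D_1,\dots,D_{i-1}\}$ with $\mathrm{Var}(D_i)\subseteq\mathrm{Var}(\Gamma)$. *)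

theory Defs
  imports "HOL-Library.Multiset"
begin

datatype 'v lit = Pos 'v | Neg 'v

fun lit_var :: "'v lit \<Rightarrow> 'v" where
  "lit_var (Pos x) = x" | "lit_var (Neg x) = x"

fun lit_neg :: "'v lit \<Rightarrow> 'v lit" where
  "lit_neg (Pos x) = Neg x" | "lit_neg (Neg x) = Pos x"

type_synonym 'v clause = "'v lit set"
type_synonym 'v cnf = "'v clause multiset"

definition tautology :: "'v clause \<Rightarrow> bool" where
  "tautology C \<longleftrightarrow> (\<exists>x. Pos x \<in> C \<and> Neg x \<in> C)"

definition vars_clause :: "'v clause \<Rightarrow> 'v set" where
  "vars_clause C = lit_var ` C"

definition vars_cnf :: "'v cnf \<Rightarrow> 'v set" where
  "vars_cnf \<Gamma> = (\<Union>C\<in>set_mset \<Gamma>. vars_clause C)"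

datatype 'v sval = F0 | T1 | L "'v lit"

type_synonym 'v subst = "'v \<Rightarrow> 'v sval"

fun sval_neg :: "'v sval \<Rightarrow> 'v sval" where
  "sval_neg F0 = T1" | "sval_neg T1 = F0" | "sval_neg (L l) = L (lit_neg l)"

fun subst_lit :: "'v subst \<Rightarrow> 'v lit \<Rightarrow> 'v sval" where
  "subst_lit \<sigma> (Pos x) = \<sigma> x"
| "subst_lit \<sigma> (Neg x) = sval_neg (\<sigma> x)"

definition is_partial_assignment :: "'v subst \<Rightarrow> bool" where
  "is_partial_assignment \<sigma> \<longleftrightarrow> (\<forall>x. \<sigma> x = F0 \<or> \<sigma> x = T1 \<or> \<sigma> x = L (Pos x))"

definition sdom :: "'v subst \<Rightarrow> 'v set" where
  "sdom \<sigma> = {x. \<sigma> x = F0 \<or> \<sigma> x = T1}"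

definition neg_clause :: "'v clause \<Rightarrow> 'v subst" where
  "neg_clause C = (\<lambda>x. if Pos x \<in> C then F0 else if Neg x \<in> C then T1 else L (Pos x))"

text \<open>Restriction of a clause: \<open>None\<close> stands for the constant 1 (satisfied or
  tautological result); otherwise the literals mapped to 0 are removed.\<close>
definition restrict_clause :: "'v subst \<Rightarrow> 'v clause \<Rightarrow> 'v clause option" where
  "restrict_clause \<sigma> C =
     (if (\<exists>l\<in>C. subst_lit \<sigma> l = T1) then None
      else (let D = {m. \<exists>l\<in>C. subst_lit \<sigma> l = L m} in
            if tautology D then None else Some D))"

definition restrict_cnf :: "'v subst \<Rightarrow> 'v cnf \<Rightarrow> 'v cnf" where
  "restrict_cnf \<sigma> \<Gamma> =
     image_mset the (filter_mset (\<lambda>c. c \<noteq> None) (image_mset (restrict_clause \<sigma>) \<Gamma>))"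

inductive up_refutes :: "'v cnf \<Rightarrow> bool" where
  empty: "{} \<in># F \<Longrightarrow> up_refutes F"
| unit: "{l} \<in># F \<Longrightarrow> up_refutes (restrict_cnf (neg_clause {lit_neg l}) F) \<Longrightarrow> up_refutes F"

definition up_implies :: "'v cnf \<Rightarrow> 'v clause \<Rightarrow> bool" where
  "up_implies \<Gamma> C \<longleftrightarrow> up_refutes (restrict_cnf (neg_clause C) \<Gamma>)"

definition up_implies_all :: "'v cnf \<Rightarrow> 'v cnf \<Rightarrow> bool" where
  "up_implies_all \<Gamma> \<Delta> \<longleftrightarrow> (\<forall>D\<in>#\<Delta>. up_implies \<Gamma> D)"

fun eval_lit :: "('v \<Rightarrow> bool) \<Rightarrow> 'v lit \<Rightarrow> bool" where
  "eval_lit \<alpha> (Pos x) = \<alpha> x" | "eval_lit \<alpha> (Neg x) = (\<not> \<alpha> x)"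

fun eval_sval :: "('v \<Rightarrow> bool) \<Rightarrow> 'v sval \<Rightarrow> bool" where
  "eval_sval \<alpha> F0 = False" | "eval_sval \<alpha> T1 = True" | "eval_sval \<alpha> (L l) = eval_lit \<alpha> l"

definition comp_assign :: "('v \<Rightarrow> bool) \<Rightarrow> 'v subst \<Rightarrow> ('v \<Rightarrow> bool)" where
  "comp_assign \<tau> \<sigma> = (\<lambda>x. eval_sval \<tau> (\<sigma> x))"

definition extends :: "('v \<Rightarrow> bool) \<Rightarrow> 'v subst \<Rightarrow> bool" where
  "extends \<tau> \<sigma> \<longleftrightarrow> (\<forall>x. (\<sigma> x = T1 \<longrightarrow> \<tau> x) \<and> (\<sigma> x = F0 \<longrightarrow> \<not> \<tau> x))"

definition models :: "('v \<Rightarrow> bool) \<Rightarrow> 'v cnf \<Rightarrow> bool" where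
  "models \<alpha> \<Gamma> \<longleftrightarrow> (\<forall>C\<in>#\<Gamma>. \<exists>l\<in>C. eval_lit \<alpha> l)"

definition cost :: "'v list \<Rightarrow> ('v \<Rightarrow> bool) \<Rightarrow> nat" where
  "cost bs \<alpha> = (\<Sum>b\<leftarrow>bs. if \<alpha> b then 1 else 0)"

definition instance_cost_is :: "'v list \<Rightarrow> 'v cnf \<Rightarrow> nat \<Rightarrow> bool" where
  "instance_cost_is bs \<Gamma> k \<longleftrightarrow>
     (\<exists>\<alpha>. models \<alpha> \<Gamma> \<and> cost bs \<alpha> = k) \<and> (\<forall>\<alpha>. models \<alpha> \<Gamma> \<longrightarrow> k \<le> cost bs \<alpha>)"

text \<open>MaxSAT instance encoded with blocking variables:
  \<open>\<Gamma> = H \<union> {C_1 \<or> b_1, \<dots>, C_m \<or> b_m}\<close> with distinct fresh \<open>b_i\<close>.\<close>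
definition blocking_instance :: "'v cnf \<Rightarrow> ('v clause \<times> 'v) list \<Rightarrow> bool" where
  "blocking_instance H soft \<longleftrightarrow>
     (\<forall>C\<in>#H. finite C) \<and> (\<forall>(C, b)\<in>set soft. finite C) \<and>
     distinct (map snd soft) \<and>
     (\<forall>b\<in>set (map snd soft). b \<notin> vars_cnf H \<and> (\<forall>(C, b')\<in>set soft. b \<notin> vars_clause C))"

definition blocking_cnf :: "'v cnf \<Rightarrow> ('v clause \<times> 'v) list \<Rightarrow> 'v cnf" where
  "blocking_cnf H soft = H + mset (map (\<lambda>(C, b). insert (Pos b) C) soft)"

definition cost_LPR :: "'v list \<Rightarrow> 'v cnf \<Rightarrow> 'v clause \<Rightarrow> bool" where
  "cost_LPR bs \<Gamma> C \<longleftrightarrow> \<not> tautology C \<and>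
     (\<exists>\<sigma>. is_partial_assignment \<sigma> \<and> sdom \<sigma> = sdom (neg_clause C) \<and>
          (\<exists>!x. \<sigma> x \<noteq> neg_clause C x) \<and>
          up_implies_all (restrict_cnf (neg_clause C) \<Gamma>) (restrict_cnf \<sigma> (\<Gamma> + {#C#})) \<and>
          (\<forall>\<tau>. extends \<tau> (neg_clause C) \<longrightarrow> cost bs (comp_assign \<tau> \<sigma>) \<le> cost bs \<tau>))"

definition cost_BC :: "'v list \<Rightarrow> 'v cnf \<Rightarrow> 'v clause \<Rightarrow> 'v lit \<Rightarrow> bool" where
  "cost_BC bs \<Gamma> E l \<longleftrightarrow> l \<in> E \<and>
     (\<forall>F\<in>#\<Gamma>. lit_neg l \<in> F \<longrightarrow> tautology ((E - {l}) \<union> (F - {lit_neg l}))) \<and>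
     (\<forall>b\<in>set bs. l \<noteq> Pos b)"

definition deriv_step ::
  "('v cnf \<Rightarrow> 'v clause \<Rightarrow> bool) \<Rightarrow> 'v cnf \<Rightarrow> 'v clause list \<Rightarrow> 'v clause \<Rightarrow> bool" where
  "deriv_step red \<Gamma> prev D \<longleftrightarrow>
     D \<in># \<Gamma>
   \<or> (finite D \<and> (\<exists>A\<in>set prev. A \<subseteq> D))
   \<or> (\<exists>A B x. insert (Pos x) A \<in> set prev \<and> insert (Neg x) B \<in> set prev \<and> D = A \<union> B)
   \<or> (finite D \<and> red (\<Gamma> + mset prev) D \<and> vars_clause D \<subseteq> vars_cnf \<Gamma>)"

definition derivation ::
  "('v cnf \<Rightarrow> 'v clause \<Rightarrow> bool) \<Rightarrow> 'v cnf \<Rightarrow> 'v clause list \<Rightarrow> bool" where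
  "derivation red \<Gamma> Ds \<longleftrightarrow> (\<forall>i<length Ds. deriv_step red \<Gamma> (take i Ds) (Ds ! i))"

definition cost_LPR_derivation :: "'v list \<Rightarrow> 'v cnf \<Rightarrow> 'v clause list \<Rightarrow> bool" where
  "cost_LPR_derivation bs \<Gamma> Ds \<longleftrightarrow> derivation (cost_LPR bs) \<Gamma> Ds"

definition cost_BC_derivation :: "'v list \<Rightarrow> 'v cnf \<Rightarrow> 'v clause list \<Rightarrow> bool" where
  "cost_BC_derivation bs \<Gamma> Ds \<longleftrightarrow> derivation (\<lambda>\<Delta> D. \<exists>l. cost_BC bs \<Delta> D l) \<Gamma> Ds"

end

theory Submission
  imports Defs
begin

lemma eval_lit_neg[simp]: "eval_lit \<alpha> (lit_neg l) = (\<not> eval_lit \<alpha> l)"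
  by (cases l) auto

lemma eval_sval_neg[simp]: "eval_sval \<alpha> (sval_neg v) = (\<not> eval_sval \<alpha> v)"
  by (cases v) auto

lemma eval_comp: "eval_lit (comp_assign \<alpha> \<sigma>) l = eval_sval \<alpha> (subst_lit \<sigma> l)"
  by (cases l) (auto simp: comp_assign_def)

lemma mem_restrict_cnf:
  "C' \<in># restrict_cnf \<sigma> G \<longleftrightarrow> (\<exists>C\<in>#G. restrict_clause \<sigma> C = Some C')"
  unfolding restrict_cnf_def by force

lemma restrict_None:
  assumes "restrict_clause \<sigma> C = None"
  shows "\<exists>l\<in>C. eval_lit (comp_assign \<alpha> \<sigma>) l"
proof (cases "\<exists>l\<in>C. subst_lit \<sigma> l = T1")
  case True
  then show ?thesis by (metis eval_comp eval_sval.simps(2))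
next
  case False
  have "tautology {m. \<exists>l\<in>C. subst_lit \<sigma> l = L m}"
  proof (rule ccontr)
    assume "\<not> tautology {m. \<exists>l\<in>C. subst_lit \<sigma> l = L m}"
    then have "restrict_clause \<sigma> C = Some {m. \<exists>l\<in>C. subst_lit \<sigma> l = L m}"
      using False unfolding restrict_clause_def Let_def by simp
    then show False using assms by simp
  qed
  then obtain y l1 l2 where "l1 \<in> C" "subst_lit \<sigma> l1 = L (Pos y)" "l2 \<in> C" "subst_lit \<sigma> l2 = L (Neg y)"
    unfolding tautology_def by auto
  then show ?thesis
    by (metis eval_comp eval_lit.simps eval_sval.simps(3))
qed

lemma restrict_Some:
  assumes "restrict_clause \<sigma> C = Some D"
  shows "(\<exists>m\<in>D. eval_lit \<alpha> m) \<longleftrightarrow> (\<exists>l\<in>C. eval_lit (comp_assign \<alpha> \<sigma>) l)"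
proof -
  have nT: "\<forall>l\<in>C. subst_lit \<sigma> l \<noteq> T1"
  proof (rule ccontr)
    assume "\<not> (\<forall>l\<in>C. subst_lit \<sigma> l \<noteq> T1)"
    then have "restrict_clause \<sigma> C = None" unfolding restrict_clause_def by simp
    then show False using assms by simp
  qed
  then have "restrict_clause \<sigma> C = (if tautology {m. \<exists>l\<in>C. subst_lit \<sigma> l = L m} then None
      else Some {m. \<exists>l\<in>C. subst_lit \<sigma> l = L m})"
    unfolding restrict_clause_def Let_def by simp
  then have D: "D = {m. \<exists>l\<in>C. subst_lit \<sigma> l = L m}" using assms by (simp split: if_splits)
  show ?thesis
  proof
    assume "\<exists>m\<in>D. eval_lit \<alpha> m"
    then obtain m l where "l \<in> C" "subst_lit \<sigma> l = L m" "eval_lit \<alpha> m" using D by auto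
    then show "\<exists>l\<in>C. eval_lit (comp_assign \<alpha> \<sigma>) l" by (metis eval_comp eval_sval.simps(3))
  next
    assume "\<exists>l\<in>C. eval_lit (comp_assign \<alpha> \<sigma>) l"
    then obtain l where l: "l \<in> C" "eval_sval \<alpha> (subst_lit \<sigma> l)" by (auto simp: eval_comp)
    then show "\<exists>m\<in>D. eval_lit \<alpha> m" using nT D
      by (cases "subst_lit \<sigma> l") auto
  qed
qed

lemma restrict_models:
  "models \<alpha> (restrict_cnf \<sigma> G) \<longleftrightarrow> models (comp_assign \<alpha> \<sigma>) G"
proof
  assume a: "models \<alpha> (restrict_cnf \<sigma> G)"
  show "models (comp_assign \<alpha> \<sigma>) G"
    unfolding models_def
  proof
    fix C assume C: "C \<in># G"
    show "\<exists>l\<in>C. eval_lit (comp_assign \<alpha> \<sigma>) l"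
    proof (cases "restrict_clause \<sigma> C")
      case None then show ?thesis by (rule restrict_None)
    next
      case (Some D)
      then have "D \<in># restrict_cnf \<sigma> G" using C mem_restrict_cnf by blast
      then have "\<exists>m\<in>D. eval_lit \<alpha> m" by (rule bspec[OF a[unfolded models_def]])
      then show ?thesis by (rule iffD1[OF restrict_Some[OF Some]])
    qed
  qed
next
  assume a: "models (comp_assign \<alpha> \<sigma>) G"
  show "models \<alpha> (restrict_cnf \<sigma> G)"
    unfolding models_def
  proof
    fix D assume "D \<in># restrict_cnf \<sigma> G"
    then obtain C where C: "C \<in># G" "restrict_clause \<sigma> C = Some D"
      unfolding mem_restrict_cnf by (elim bexE) 
    have "\<exists>l\<in>C. eval_lit (comp_assign \<alpha> \<sigma>) l" using C(1) by (rule bspec[OF a[unfolded models_def]])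
    then show "\<exists>m\<in>D. eval_lit \<alpha> m" by (rule iffD2[OF restrict_Some[OF C(2)]])
  qed
qed

lemma comp_neg_clause:
  assumes "\<forall>l\<in>C. \<not> eval_lit \<alpha> l"
  shows "comp_assign \<alpha> (neg_clause C) = \<alpha>"
proof (rule ext)
  fix x
  show "comp_assign \<alpha> (neg_clause C) x = \<alpha> x"
  proof (cases "Pos x \<in> C")
    case True
    then have "\<not> \<alpha> x" using assms by fastforce
    then show ?thesis using True by (simp add: comp_assign_def neg_clause_def)
  next
    case False
    show ?thesis
    proof (cases "Neg x \<in> C")
      case True
      then have "\<alpha> x" using assms by fastforce
      then show ?thesis using True False by (simp add: comp_assign_def neg_clause_def)
    next
      case F2: False
      then show ?thesis using False by (simp add: comp_assign_def neg_clause_def)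
    qed
  qed
qed

lemma up_sound: "up_refutes G \<Longrightarrow> \<not> models \<alpha> G"
proof (induction rule: up_refutes.induct)
  case (empty F)
  then show ?case unfolding models_def by fastforce
next
  case (unit l F)
  show ?case
  proof
    assume m: "models \<alpha> F"
    then have "eval_lit \<alpha> l" using unit.hyps(1) unfolding models_def by fastforce
    then have "comp_assign \<alpha> (neg_clause {lit_neg l}) = \<alpha>"
      by (intro comp_neg_clause) auto
    then have "models \<alpha> (restrict_cnf (neg_clause {lit_neg l}) F)"
      using m restrict_models[of \<alpha> "neg_clause {lit_neg l}" F] by simp
    then show False using unit.IH by blast
  qed
qed

lemma up_implies_sound:
  assumes "up_implies G D" "models \<alpha> G"
  shows "\<exists>l\<in>D. eval_lit \<alpha> l"
proof (rule ccontr)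
  assume "\<not> (\<exists>l\<in>D. eval_lit \<alpha> l)"
  then have "comp_assign \<alpha> (neg_clause D) = \<alpha>" by (intro comp_neg_clause) auto
  then have "models \<alpha> (restrict_cnf (neg_clause D) G)" using assms(2) restrict_models[of \<alpha> "neg_clause D" G] by simp
  then show False using up_sound assms(1) unfolding up_implies_def by blast
qed

lemma models_plus[simp]: "models \<alpha> (A + B) \<longleftrightarrow> models \<alpha> A \<and> models \<alpha> B"
  unfolding models_def by auto

lemma models_single[simp]: "models \<alpha> {#D#} \<longleftrightarrow> (\<exists>l\<in>D. eval_lit \<alpha> l)"
  unfolding models_def by auto

lemma models_add[simp]: "models \<alpha> (add_mset D A) \<longleftrightarrow> (\<exists>l\<in>D. eval_lit \<alpha> l) \<and> models \<alpha> A"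
  unfolding models_def by auto

lemma cost_eq:
  assumes "\<forall>y\<in>set bs. g y = f y"
  shows "cost bs g = cost bs f"
  using assms by (induction bs) (auto simp: cost_def)

lemma cost_less:
  assumes "distinct bs" "b \<in> set bs" "\<forall>y. y \<noteq> b \<longrightarrow> g y = f y" "\<not> f b" "g b"
  shows "cost bs f < cost bs g"
  using assms
proof (induction bs)
  case Nil
  then show ?case by simp
next
  case (Cons a bs)
  show ?case
  proof (cases "a = b")
    case True
    then have "b \<notin> set bs" using Cons.prems(1) by simp
    then have "\<forall>y\<in>set bs. g y = f y" using Cons.prems(3) by auto
    then have "cost bs g = cost bs f" by (rule cost_eq)
    then show ?thesis using True Cons.prems(4,5) by (simp add: cost_def)
  next
    case False
    then have "cost bs f < cost bs g" using Cons by simp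
    moreover have "g a = f a" using Cons.prems(3) False by simp
    ultimately show ?thesis by (simp add: cost_def)
  qed
qed

lemma LPR_preserves:
  assumes red: "cost_LPR bs F C" and m: "models \<alpha> F" and nb: "\<not> \<alpha> b"
    and bb: "b \<in> set bs" and dist: "distinct bs"
  shows "\<exists>\<alpha>'. models \<alpha>' (F + {#C#}) \<and> \<not> \<alpha>' b"
proof (cases "\<exists>l\<in>C. eval_lit \<alpha> l")
  case True
  then show ?thesis using m nb by auto
next
  case False
  then have hc: "comp_assign \<alpha> (neg_clause C) = \<alpha>" by (intro comp_neg_clause) auto
  obtain \<sigma> where
    ex1: "\<exists>!x. \<sigma> x \<noteq> neg_clause C x" and
    up: "up_implies_all (restrict_cnf (neg_clause C) F) (restrict_cnf \<sigma> (F + {#C#}))" and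
    cst: "\<forall>\<tau>. extends \<tau> (neg_clause C) \<longrightarrow> cost bs (comp_assign \<tau> \<sigma>) \<le> cost bs \<tau>"
    using red unfolding cost_LPR_def by blast
  obtain x where x: "\<sigma> x \<noteq> neg_clause C x" and xu: "\<forall>y. \<sigma> y \<noteq> neg_clause C y \<longrightarrow> y = x"
    using ex1 by blast
  have mr: "models \<alpha> (restrict_cnf (neg_clause C) F)"
    using m restrict_models[of \<alpha> "neg_clause C" F] hc by simp
  have "models \<alpha> (restrict_cnf \<sigma> (F + {#C#}))"
    unfolding models_def
  proof
    fix D assume "D \<in># restrict_cnf \<sigma> (F + {#C#})"
    then have "up_implies (restrict_cnf (neg_clause C) F) D" using up unfolding up_implies_all_def by blast
    then show "\<exists>l\<in>D. eval_lit \<alpha> l" using mr by (rule up_implies_sound)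
  qed
  then have m2: "models (comp_assign \<alpha> \<sigma>) (F + {#C#})" using restrict_models by blast
  have agree: "\<forall>y. y \<noteq> x \<longrightarrow> comp_assign \<alpha> \<sigma> y = \<alpha> y"
  proof (intro allI impI)
    fix y assume "y \<noteq> x"
    then have "\<sigma> y = neg_clause C y" using xu by blast
    then have "comp_assign \<alpha> \<sigma> y = comp_assign \<alpha> (neg_clause C) y" by (simp add: comp_assign_def)
    then show "comp_assign \<alpha> \<sigma> y = \<alpha> y" using hc by simp
  qed
  have ext: "extends \<alpha> (neg_clause C)"
    unfolding extends_def
  proof (intro allI conjI impI)
    fix y
    have e: "comp_assign \<alpha> (neg_clause C) y = \<alpha> y" using hc by simp
    show "\<alpha> y" if "neg_clause C y = T1" using e that by (simp add: comp_assign_def)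
    show "\<not> \<alpha> y" if "neg_clause C y = F0" using e that by (simp add: comp_assign_def)
  qed
  have "\<not> comp_assign \<alpha> \<sigma> b"
  proof
    assume cb: "comp_assign \<alpha> \<sigma> b"
    then have "b = x" using agree nb by metis
    then have "cost bs \<alpha> < cost bs (comp_assign \<alpha> \<sigma>)"
      using cost_less[OF dist bb, of "comp_assign \<alpha> \<sigma>" \<alpha>] agree nb cb by blast
    moreover have "cost bs (comp_assign \<alpha> \<sigma>) \<le> cost bs \<alpha>" using cst ext by blast
    ultimately show False by simp
  qed
  then show ?thesis using m2 by blast
qed

lemma BC_preserves:
  assumes red: "cost_BC bs F E l" and m: "models \<alpha> F" and nb: "\<not> \<alpha> b"
    and bb: "b \<in> set bs"
  shows "\<exists>\<alpha>'. models \<alpha>' (F + {#E#}) \<and> \<not> \<alpha>' b"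
proof (cases "\<exists>k\<in>E. eval_lit \<alpha> k")
  case True
  then show ?thesis using m nb by auto
next
  case False
  have lE: "l \<in> E" and taut: "\<forall>G\<in>#F. lit_neg l \<in> G \<longrightarrow> tautology ((E - {l}) \<union> (G - {lit_neg l}))"
    and npos: "\<forall>b\<in>set bs. l \<noteq> Pos b"
    using red unfolding cost_BC_def by blast+
  have nl: "\<not> eval_lit \<alpha> l" using False lE by blast
  define v where "v = lit_var l"
  define \<alpha>' where "\<alpha>' = \<alpha>(v := \<not> \<alpha> v)"
  have same: "eval_lit \<alpha>' k = eval_lit \<alpha> k" if "lit_var k \<noteq> v" for k
    using that by (cases k) (auto simp: \<alpha>'_def)
  have lt: "eval_lit \<alpha>' l" using nl by (cases l) (auto simp: \<alpha>'_def v_def)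
  have varl: "k = l \<or> k = lit_neg l" if "lit_var k = v" for k
    using that unfolding v_def by (cases k; cases l) auto
  have Efalse: "\<not> eval_lit \<alpha>' k" if "k \<in> E - {l}" for k
  proof (cases "lit_var k = v")
    case True
    then have "k = lit_neg l" using varl that by blast
    then have "eval_lit \<alpha> k" using nl by simp
    then show ?thesis using False that by blast
  next
    case F2: False
    then show ?thesis using same[OF F2] False that by blast
  qed
  have mF: "models \<alpha>' F"
    unfolding models_def
  proof
    fix G assume G: "G \<in># F"
    then obtain k where k: "k \<in> G" "eval_lit \<alpha> k" using m unfolding models_def by blast
    show "\<exists>k\<in>G. eval_lit \<alpha>' k"
    proof (cases "lit_var k = v")
      case F2: False
      then show ?thesis using same[OF F2] k by blast
    next
      case True
      then have "k = lit_neg l" using varl k nl by blast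
      then have "tautology ((E - {l}) \<union> (G - {lit_neg l}))" using taut G k by blast
      then obtain y where y: "Pos y \<in> (E - {l}) \<union> (G - {lit_neg l})" "Neg y \<in> (E - {l}) \<union> (G - {lit_neg l})"
        unfolding tautology_def by blast
      have "eval_lit \<alpha>' (Pos y) \<or> eval_lit \<alpha>' (Neg y)" by simp
      then show ?thesis using y Efalse by blast
    qed
  qed
  have "v \<noteq> b"
  proof
    assume vb: "v = b"
    show False
    proof (cases l)
      case (Pos z)
      then show False using vb npos bb v_def by auto
    next
      case (Neg z)
      then show False using vb nl nb v_def by simp
    qed
  qed
  then have "\<not> \<alpha>' b" using nb by (simp add: \<alpha>'_def)
  then show ?thesis using mF lt lE by auto
qed

lemma sat_mem: "models \<alpha> F \<Longrightarrow> C \<in># F \<Longrightarrow> \<exists>l\<in>C. eval_lit \<alpha> l"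
  unfolding models_def by (rule bspec)

lemma step_preserves:
  assumes red_ok: "\<And>F D \<alpha>. red F D \<Longrightarrow> models \<alpha> F \<Longrightarrow> \<not> \<alpha> b \<Longrightarrow> \<exists>\<alpha>'. models \<alpha>' (F + {#D#}) \<and> \<not> \<alpha>' b"
    and st: "deriv_step red \<Gamma> prev D" and m: "models \<alpha> (\<Gamma> + mset prev)" and nb: "\<not> \<alpha> b"
  shows "\<exists>\<alpha>'. models \<alpha>' (\<Gamma> + mset prev + {#D#}) \<and> \<not> \<alpha>' b"
proof -
  have keep: "\<exists>\<alpha>'. models \<alpha>' (\<Gamma> + mset prev + {#D#}) \<and> \<not> \<alpha>' b" if "\<exists>l\<in>D. eval_lit \<alpha> l"
    using that m nb by auto
  have mG: "models \<alpha> \<Gamma>" and mP: "models \<alpha> (mset prev)" using m by auto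
  consider (a) "D \<in># \<Gamma>" | (b) "\<exists>A\<in>set prev. A \<subseteq> D"
    | (c) "\<exists>A B x. insert (Pos x) A \<in> set prev \<and> insert (Neg x) B \<in> set prev \<and> D = A \<union> B"
    | (d) "red (\<Gamma> + mset prev) D"
    using st unfolding deriv_step_def by blast
  then show ?thesis
  proof cases
    case a
    then show ?thesis using keep sat_mem[OF mG] by blast
  next
    case b
    then obtain A where A: "A \<in> set prev" "A \<subseteq> D" by blast
    then have "\<exists>l\<in>A. eval_lit \<alpha> l" using sat_mem[OF mP] by simp
    then show ?thesis using keep A(2) by blast
  next
    case c
    then obtain A B x where A: "insert (Pos x) A \<in> set prev" and B: "insert (Neg x) B \<in> set prev" and D: "D = A \<union> B"
      by blast
    obtain k1 where k1: "k1 \<in> insert (Pos x) A" "eval_lit \<alpha> k1" using sat_mem[OF mP] A by fastforce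
    obtain k2 where k2: "k2 \<in> insert (Neg x) B" "eval_lit \<alpha> k2" using sat_mem[OF mP] B by fastforce
    have "\<exists>l\<in>D. eval_lit \<alpha> l"
    proof (cases "k1 = Pos x")
      case True
      then have "k2 \<noteq> Neg x" using k1 k2 by auto
      then show ?thesis using k2 D by auto
    next
      case False
      then show ?thesis using k1 D by auto
    qed
    then show ?thesis by (rule keep)
  next
    case d
    then show ?thesis using red_ok m nb by blast
  qed
qed

lemma deriv_inv:
  assumes red_ok: "\<And>F D \<alpha>. red F D \<Longrightarrow> models \<alpha> F \<Longrightarrow> \<not> \<alpha> b \<Longrightarrow> \<exists>\<alpha>'. models \<alpha>' (F + {#D#}) \<and> \<not> \<alpha>' b"
    and der: "derivation red \<Gamma> Ds" and m0: "models \<alpha>0 \<Gamma>" and nb0: "\<not> \<alpha>0 b"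
  shows "{Pos b} \<notin> set Ds"
proof
  have inv: "i \<le> length Ds \<Longrightarrow> \<exists>\<alpha>. models \<alpha> (\<Gamma> + mset (take i Ds)) \<and> \<not> \<alpha> b" for i
  proof (induction i)
    case 0
    then show ?case using m0 nb0 by auto
  next
    case (Suc i)
    then obtain \<alpha> where a: "models \<alpha> (\<Gamma> + mset (take i Ds))" "\<not> \<alpha> b" by auto
    have il: "i < length Ds" using Suc.prems by simp
    have step: "deriv_step red \<Gamma> (take i Ds) (Ds ! i)" using der il unfolding derivation_def by blast
    have tk: "mset (take (Suc i) Ds) = mset (take i Ds) + {#Ds ! i#}"
      using il by (simp add: take_Suc_conv_app_nth)
    have "\<exists>\<alpha>'. models \<alpha>' (\<Gamma> + mset (take i Ds) + {#Ds ! i#}) \<and> \<not> \<alpha>' b"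
      by (rule step_preserves[OF _ step a]) (rule red_ok; assumption)
    then show ?case using tk by (simp add: add.assoc)
  qed
  assume "{Pos b} \<in> set Ds"
  then obtain i where i: "i < length Ds" "Ds ! i = {Pos b}" by (auto simp: in_set_conv_nth)
  then obtain \<alpha> where a: "models \<alpha> (\<Gamma> + mset (take (Suc i) Ds))" "\<not> \<alpha> b" using inv[of "Suc i"] by auto
  have "mset (take (Suc i) Ds) = mset (take i Ds) + {#{Pos b}#}"
    using i by (simp add: take_Suc_conv_app_nth)
  then have "\<alpha> b" using a(1) by simp
  then show False using a(2) by simp
qed

lemma main_gen:
  assumes "models \<alpha>0 \<Gamma>" "\<not> \<alpha>0 b" "b \<in> set bs" "distinct bs"
  shows "cost_LPR_derivation bs \<Gamma> Ds \<Longrightarrow> {Pos b} \<notin> set Ds"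
    and "cost_BC_derivation bs \<Gamma> Ds \<Longrightarrow> {Pos b} \<notin> set Ds"
proof -
  have r1: "\<exists>\<alpha>'. models \<alpha>' (F + {#D#}) \<and> \<not> \<alpha>' b"
    if "cost_LPR bs F D" "models \<alpha> F" "\<not> \<alpha> b" for F D \<alpha>
    using LPR_preserves[OF that assms(3,4)] .
  have r2: "\<exists>\<alpha>'. models \<alpha>' (F + {#D#}) \<and> \<not> \<alpha>' b"
    if h: "\<exists>l. cost_BC bs F D l" "models \<alpha> F" "\<not> \<alpha> b" for F D \<alpha>
  proof -
    obtain l where "cost_BC bs F D l" using h(1) by blast
    then show ?thesis by (rule BC_preserves[OF _ h(2,3) assms(3)])
  qed
  show "cost_LPR_derivation bs \<Gamma> Ds \<Longrightarrow> {Pos b} \<notin> set Ds"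
    unfolding cost_LPR_derivation_def
    by (rule deriv_inv[OF _ _ assms(1,2)]) (rule r1; assumption)
  show "cost_BC_derivation bs \<Gamma> Ds \<Longrightarrow> {Pos b} \<notin> set Ds"
    unfolding cost_BC_derivation_def
    by (rule deriv_inv[OF _ _ assms(1,2)]) (rule r2; assumption)
qed

theorem corollary5p2:
  shows "\<exists>(H :: nat cnf) soft.
           blocking_instance H soft \<and>
           instance_cost_is (map snd soft) (blocking_cnf H soft) 1 \<and>
           (\<forall>Ds. cost_LPR_derivation (map snd soft) (blocking_cnf H soft) Ds \<longrightarrow>
                   (\<forall>b\<in>set (map snd soft). {Pos b} \<notin> set Ds)) \<and>
           (\<forall>Ds. cost_BC_derivation (map snd soft) (blocking_cnf H soft) Ds \<longrightarrow>
                   (\<forall>b\<in>set (map snd soft). {Pos b} \<notin> set Ds))"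
proof -
  define H :: "nat cnf" where "H = {#}"
  define soft :: "(nat clause \<times> nat) list" where "soft = [({Pos 0}, 1), ({Neg 0}, 2)]"
  have bs: "map snd soft = [1, 2]" by (simp add: soft_def)
  have G: "blocking_cnf H soft = {#{Pos 1, Pos 0}, {Pos 2, Neg 0}#}"
    by (simp add: blocking_cnf_def H_def soft_def)
  have bi: "blocking_instance H soft"
    by (simp add: blocking_instance_def H_def soft_def vars_cnf_def vars_clause_def)
  have mod: "models \<alpha> (blocking_cnf H soft) \<longleftrightarrow> (\<alpha> 1 \<or> \<alpha> 0) \<and> (\<alpha> 2 \<or> \<not> \<alpha> 0)" for \<alpha>
    by (simp add: G models_def)
  have c: "cost [1, 2] \<alpha> = (if \<alpha> 1 then 1 else 0) + (if \<alpha> 2 then 1 else 0)" for \<alpha> :: "nat \<Rightarrow> bool"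
    by (simp add: cost_def)
  have ic: "instance_cost_is (map snd soft) (blocking_cnf H soft) 1"
    unfolding instance_cost_is_def bs
  proof (intro conjI allI impI)
    show "\<exists>\<alpha>. models \<alpha> (blocking_cnf H soft) \<and> cost [1, 2] \<alpha> = 1"
      by (rule exI[of _ "\<lambda>v. v = 1"]) (simp add: mod cost_def)
    fix \<alpha> assume "models \<alpha> (blocking_cnf H soft)"
    then show "1 \<le> cost [1, 2] \<alpha>" unfolding mod c by auto
  qed
  have wit: "\<exists>\<alpha>. models \<alpha> (blocking_cnf H soft) \<and> \<not> \<alpha> b" if "b \<in> set (map snd soft)" for b
  proof -
    have "b = 1 \<or> b = 2" using that bs by simp
    then show ?thesis
    proof
      assume "b = 1"
      then show ?thesis by (intro exI[of _ "\<lambda>v. v = 0 \<or> v = 2"]) (simp add: mod)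
    next
      assume "b = 2"
      then show ?thesis by (intro exI[of _ "\<lambda>v. v = 1"]) (simp add: mod)
    qed
  qed
  have dist: "distinct (map snd soft)" using bs by simp
  have l1: "\<forall>Ds. cost_LPR_derivation (map snd soft) (blocking_cnf H soft) Ds \<longrightarrow>
                   (\<forall>b\<in>set (map snd soft). {Pos b} \<notin> set Ds)"
  proof (intro allI impI ballI)
    fix Ds b assume d: "cost_LPR_derivation (map snd soft) (blocking_cnf H soft) Ds" and b: "b \<in> set (map snd soft)"
    obtain \<alpha> where "models \<alpha> (blocking_cnf H soft)" "\<not> \<alpha> b" using wit[OF b] by blast
    from main_gen(1)[OF this b dist d] show "{Pos b} \<notin> set Ds" .
  qed
  have l2: "\<forall>Ds. cost_BC_derivation (map snd soft) (blocking_cnf H soft) Ds \<longrightarrow>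
                   (\<forall>b\<in>set (map snd soft). {Pos b} \<notin> set Ds)"
  proof (intro allI impI ballI)
    fix Ds b assume d: "cost_BC_derivation (map snd soft) (blocking_cnf H soft) Ds" and b: "b \<in> set (map snd soft)"
    obtain \<alpha> where "models \<alpha> (blocking_cnf H soft)" "\<not> \<alpha> b" using wit[OF b] by blast
    from main_gen(2)[OF this b dist d] show "{Pos b} \<notin> set Ds" .
  qed
  show ?thesis using bi ic l1 l2 by blast
qed

end
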